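(* (Completeness) For every set $\Phi\subseteq\mathcal{L}_T$ and every $\alpha\in\mathcal{L}_T$: if $\Phi\models\alpha$, then $\Phi\vdash\alpha$ in SBTrust.
   Context: Propositional formulas: $\varphi::=\bot\mid p\mid\varphi\land\varphi\mid\varphi\lor\varphi\mid\varphi\to\varphi\mid\varphi\leftrightarrow\varphi\mid\neg\varphi$ over a countable set of variables. $\mathcal{L}_T$: $\alpha::=\varphi\mid\varphi\rightsquigarrow\varphi\mid B(\alpha)\mid\alpha*\alpha\mid\neg\alpha$ ($\varphi$ propositional, $*\in\{\land,\lor,\to,\leftrightarrow\}$). SBTrust is the Hilbert system (rule applications must yield formulas of $\mathcal{L}_T$; $\varphi,\psi,\chi,\varphi_i,\psi_i$ propositional; $\alpha,\beta\in\mathcal{L}_T$) with: all classical tautologies over $\mathcal{L}_T$ and Modus Ponens; $\mathbf{ID}$: $\varphi\rightsquigarrow\varphi$; $\mathbf{ST}$: $(\varphi\rightsquigarrow\bot)\to\neg\varphi$; $\mathbf{SH}$: $((\psi\land\chi)\rightsquigarrow\varphi)\to(\psi\rightsquigarrow(\chi\to\varphi))$; $\mathbf{LL+}$: $(\neg(\varphi\leftrightarrow\psi)\rightsquigarrow\bot)\to((\varphi\rightsquigarrow\chi)\leftrightarrow(\psi\rightsquigarrow\chi))$; rule $\mathbf{RCK}$: from $(\varphi_1\land\dots\land\varphi_n)\to\varphi_{n+1}$ infer $((\psi\rightsquigarrow\varphi_1)\land\dots\land(\psi\rightsquigarrow\varphi_n))\to(\psi\rightsquigarrow\varphi_{n+1})$;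 rule $\mathbf{S5_F}$: from $(\ell_1\land\dots\land\ell_n)\to\chi$ infer $(\ell_1\land\dots\land\ell_n)\to(\neg\chi\rightsquigarrow\bot)$, each $\ell_j$ being $\varphi_j\rightsquigarrow\psi_j$ or $\neg(\varphi_j\rightsquigarrow\psi_j)$, $\chi$ propositional; $\mathbf{KB}$: $B(\alpha\to\beta)\to(B(\alpha)\to B(\beta))$; $\mathbf{DB}$: $B(\alpha)\to\neg B(\neg\alpha)$; $\mathbf{4B}$: $B(\alpha)\to B(B(\alpha))$; necessitation for $B$. $\Phi\vdash\alpha$ is derivability from assumptions in the usual sense. A Trust model is $\mathcal{M}=\langle S,(S_i)_{i\in I},(\succeq_i)_{i\in I},R,V\rangle$: $R\subseteq S\times S$ serial and transitive; $(S_i)$ a partition of $S$; $\succeq_i\subseteq S_i\times S_i$ arbitrary; $V$ maps variables to subsets of $S$; and for each $i$ and propositional $\varphi$, $\|\varphi\|_i\neq\emptyset\Rightarrow\mathit{most}(\|\varphi\|_i)\neq\emptyset$, with $\|\varphi\|_i=\{v\in S_i:\mathcal{M},v\models\varphi\}$, $\mathit{most}(X)=\{s\in X:\forall v\in X\,(v\succeq_i s\Rightarrow s\succeq_i v)\}$. Truth: $s\models p$ iff $s\in V(p)$; Boolean clauses as usual; $s\models\varphi\rightsquigarrow\psi$ iff $\mathit{most}(\|\varphi\|_i)\subseteq\|\psi\|_i$ where $s\in S_i$; $s\models B(\alpha)$ iff $v\models\alpha$ for every $v$ with $sRv$. $\Phi\models\alpha$: in every Trust model, every state satisfying all of $\Phi$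 satisfies $\alpha$. *)

theory Defs
  imports Main
begin

datatype pform =
    PBot
  | PVar nat
  | PAnd pform pform
  | POr pform pform
  | PImp pform pform
  | PIff pform pform
  | PNot pform

text \<open>The language L_T.  Propositional formulas are embedded homomorphically
  (via emb below), so every formula of L_T has a unique representation.\<close>
datatype tform =
    TBot
  | TVar nat
  | TCond pform pform
  | TB tform
  | TAnd tform tform
  | TOr tform tform
  | TImp tform tform
  | TIff tform tform
  | TNot tform

fun emb :: "pform \<Rightarrow> tform" where
  "emb PBot = TBot"
| "emb (PVar p) = TVar p"
| "emb (PAnd a b) = TAnd (emb a) (emb b)"
| "emb (POr a b) = TOr (emb a) (emb b)"
| "emb (PImp a b) = TImp (emb a) (emb b)"
| "emb (PIff a b) = TIff (emb a) (emb b)"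
| "emb (PNot a) = TNot (emb a)"

fun bigconj :: "tform list \<Rightarrow> tform" where
  "bigconj [] = TNot TBot"
| "bigconj [a] = a"
| "bigconj (a # as) = TAnd a (bigconj as)"

definition limp :: "tform list \<Rightarrow> tform \<Rightarrow> tform" where
  "limp as c = (if as = [] then c else TImp (bigconj as) c)"

definition is_literal :: "tform \<Rightarrow> bool" where
  "is_literal l \<longleftrightarrow> (\<exists>\<phi> \<psi>. l = TCond \<phi> \<psi>) \<or> (\<exists>\<phi> \<psi>. l = TNot (TCond \<phi> \<psi>))"

text \<open>Truth-functional evaluation: the non-Boolean subformulas (variables,
  conditionals, belief formulas) are treated as atoms.\<close>
fun teval :: "(tform \<Rightarrow> bool) \<Rightarrow> tform \<Rightarrow> bool" where
  "teval f TBot = False"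
| "teval f (TVar p) = f (TVar p)"
| "teval f (TCond a b) = f (TCond a b)"
| "teval f (TB a) = f (TB a)"
| "teval f (TAnd a b) = (teval f a \<and> teval f b)"
| "teval f (TOr a b) = (teval f a \<or> teval f b)"
| "teval f (TImp a b) = (teval f a \<longrightarrow> teval f b)"
| "teval f (TIff a b) = (teval f a \<longleftrightarrow> teval f b)"
| "teval f (TNot a) = (\<not> teval f a)"

definition tautology :: "tform \<Rightarrow> bool" where
  "tautology a \<longleftrightarrow> (\<forall>f. teval f a)"

inductive SBTrust_thm :: "tform \<Rightarrow> bool" where
  TAUT: "tautology a \<Longrightarrow> SBTrust_thm a"
| MP: "SBTrust_thm a \<Longrightarrow> SBTrust_thm (TImp a b) \<Longrightarrow> SBTrust_thm b"
| ID: "SBTrust_thm (TCond \<phi> \<phi>)"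
| ST: "SBTrust_thm (TImp (TCond \<phi> PBot) (TNot (emb \<phi>)))"
| SH: "SBTrust_thm (TImp (TCond (PAnd \<psi> \<chi>) \<phi>) (TCond \<psi> (PImp \<chi> \<phi>)))"
| LLplus: "SBTrust_thm (TImp (TCond (PNot (PIff \<phi> \<psi>)) PBot)
                              (TIff (TCond \<phi> \<chi>) (TCond \<psi> \<chi>)))"
| RCK: "SBTrust_thm (limp (map emb \<phi>s) (emb \<phi>')) \<Longrightarrow>
        SBTrust_thm (limp (map (TCond \<psi>) \<phi>s) (TCond \<psi> \<phi>'))"
| S5F: "\<forall>l \<in> set ls. is_literal l \<Longrightarrow> SBTrust_thm (limp ls (emb \<chi>)) \<Longrightarrow>
        SBTrust_thm (limp ls (TCond (PNot \<chi>) PBot))"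
| KB: "SBTrust_thm (TImp (TB (TImp a b)) (TImp (TB a) (TB b)))"
| DB: "SBTrust_thm (TImp (TB a) (TNot (TB (TNot a))))"
| FourB: "SBTrust_thm (TImp (TB a) (TB (TB a)))"
| NecB: "SBTrust_thm a \<Longrightarrow> SBTrust_thm (TB a)"

text \<open>Derivability from assumptions in the usual sense: the rules (RCK, S5_F,
  necessitation) apply to theorems only; assumptions are combined by MP.\<close>
inductive derivable :: "tform set \<Rightarrow> tform \<Rightarrow> bool" (infix "\<turnstile>" 50) where
  Assm: "a \<in> \<Phi> \<Longrightarrow> \<Phi> \<turnstile> a"
| Thm: "SBTrust_thm a \<Longrightarrow> \<Phi> \<turnstile> a"
| MPd: "\<Phi> \<turnstile> a \<Longrightarrow> \<Phi> \<turnstile> TImp a b \<Longrightarrow> \<Phi> \<turnstile> b"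

text \<open>The partition (S_i)_{i \<in> I} is represented by its set of cells;
  the preorder-like relation \<succeq>_i is indexed by the cell S_i.\<close>
record 'w trust_model =
  St :: "'w set"
  Cells :: "'w set set"
  Pref :: "'w set \<Rightarrow> 'w \<Rightarrow> 'w \<Rightarrow> bool"
  Rel :: "'w \<Rightarrow> 'w \<Rightarrow> bool"
  Val :: "nat \<Rightarrow> 'w set"

fun psat :: "('w, 'x) trust_model_scheme \<Rightarrow> 'w \<Rightarrow> pform \<Rightarrow> bool" where
  "psat M s PBot = False"
| "psat M s (PVar p) = (s \<in> Val M p)"
| "psat M s (PAnd a b) = (psat M s a \<and> psat M s b)"
| "psat M s (POr a b) = (psat M s a \<or> psat M s b)"
| "psat M s (PImp a b) = (psat M s a \<longrightarrow> psat M s b)"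
| "psat M s (PIff a b) = (psat M s a \<longleftrightarrow> psat M s b)"
| "psat M s (PNot a) = (\<not> psat M s a)"

definition ext :: "('w, 'x) trust_model_scheme \<Rightarrow> 'w set \<Rightarrow> pform \<Rightarrow> 'w set" where
  "ext M C \<phi> = {v \<in> C. psat M v \<phi>}"

definition most :: "('w, 'x) trust_model_scheme \<Rightarrow> 'w set \<Rightarrow> 'w set \<Rightarrow> 'w set" where
  "most M C X = {s \<in> X. \<forall>v \<in> X. Pref M C v s \<longrightarrow> Pref M C s v}"

definition is_partition :: "'w set \<Rightarrow> 'w set set \<Rightarrow> bool" where
  "is_partition S P \<longleftrightarrow> \<Union>P = S \<and> {} \<notin> P \<and>
     (\<forall>C \<in> P. \<forall>D \<in> P. C \<noteq> D \<longrightarrow> C \<inter> D = {})"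

definition trust_model :: "('w, 'x) trust_model_scheme \<Rightarrow> bool" where
  "trust_model M \<longleftrightarrow>
     (\<forall>s t. Rel M s t \<longrightarrow> s \<in> St M \<and> t \<in> St M) \<and>
     (\<forall>s \<in> St M. \<exists>t. Rel M s t) \<and>
     (\<forall>s t u. Rel M s t \<longrightarrow> Rel M t u \<longrightarrow> Rel M s u) \<and>
     is_partition (St M) (Cells M) \<and>
     (\<forall>C \<in> Cells M. \<forall>s t. Pref M C s t \<longrightarrow> s \<in> C \<and> t \<in> C) \<and>
     (\<forall>p. Val M p \<subseteq> St M) \<and>
     (\<forall>C \<in> Cells M. \<forall>\<phi>. ext M C \<phi> \<noteq> {} \<longrightarrow> most M C (ext M C \<phi>) \<noteq> {})"

fun tsat :: "('w, 'x) trust_model_scheme \<Rightarrow> 'w \<Rightarrow> tform \<Rightarrow> bool" where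
  "tsat M s TBot = False"
| "tsat M s (TVar p) = (s \<in> Val M p)"
| "tsat M s (TCond \<phi> \<psi>) =
     (\<forall>C \<in> Cells M. s \<in> C \<longrightarrow> most M C (ext M C \<phi>) \<subseteq> ext M C \<psi>)"
| "tsat M s (TB a) = (\<forall>v. Rel M s v \<longrightarrow> tsat M v a)"
| "tsat M s (TAnd a b) = (tsat M s a \<and> tsat M s b)"
| "tsat M s (TOr a b) = (tsat M s a \<or> tsat M s b)"
| "tsat M s (TImp a b) = (tsat M s a \<longrightarrow> tsat M s b)"
| "tsat M s (TIff a b) = (tsat M s a \<longleftrightarrow> tsat M s b)"
| "tsat M s (TNot a) = (\<not> tsat M s a)"

definition entails_on :: "'w itself \<Rightarrow> tform set \<Rightarrow> tform \<Rightarrow> bool" where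
  "entails_on _ \<Phi> a \<longleftrightarrow>
     (\<forall>M :: 'w trust_model. trust_model M \<longrightarrow>
        (\<forall>s \<in> St M. (\<forall>b \<in> \<Phi>. tsat M s b) \<longrightarrow> tsat M s a))"

text \<open>\<Phi> \<Turnstile> a: quantification over all Trust models whose state space is
  (a subset of) a fixed, very large type (cardinality 2^(2^aleph0)),
  which contains an isomorphic copy of every model of cardinality at most that.\<close>
definition entails :: "tform set \<Rightarrow> tform \<Rightarrow> bool" (infix "\<Turnstile>" 50) where
  "\<Phi> \<Turnstile> a \<longleftrightarrow> entails_on TYPE(tform set set) \<Phi> a"

end

theory Submission
  imports Defs
begin


fun imps :: "tform list \<Rightarrow> tform \<Rightarrow> tform" where
  "imps [] c = c"
| "imps (a # as) c = TImp a (imps as c)"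

fun pimps :: "pform list \<Rightarrow> pform \<Rightarrow> pform" where
  "pimps [] c = c"
| "pimps (a # as) c = PImp a (pimps as c)"

lemma teval_imps: "teval f (imps L c) = ((\<forall>x\<in>set L. teval f x) \<longrightarrow> teval f c)"
  by (induction L) auto

lemma teval_bigconj: "teval f (bigconj L) = (\<forall>x\<in>set L. teval f x)"
  by (induction L rule: bigconj.induct) auto

lemma teval_limp: "teval f (limp L c) = ((\<forall>x\<in>set L. teval f x) \<longrightarrow> teval f c)"
  by (auto simp: limp_def teval_bigconj)

lemma emb_pimps: "emb (pimps P c) = imps (map emb P) (emb c)"
  by (induction P) auto

lemma thm_taut1: "SBTrust_thm x \<Longrightarrow> (\<And>f. teval f x \<Longrightarrow> teval f y) \<Longrightarrow> SBTrust_thm y"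
  by (rule SBTrust_thm.MP[of x], assumption, rule SBTrust_thm.TAUT, auto simp: tautology_def)

lemma thm_taut2: "SBTrust_thm x \<Longrightarrow> SBTrust_thm y \<Longrightarrow> (\<And>f. teval f x \<Longrightarrow> teval f y \<Longrightarrow> teval f z) \<Longrightarrow> SBTrust_thm z"
  apply (rule SBTrust_thm.MP[of y], assumption)
  apply (rule SBTrust_thm.MP[of x], assumption)
  apply (rule SBTrust_thm.TAUT, auto simp: tautology_def)
  done

lemma thm_limp_imps: "SBTrust_thm (limp L c) \<longleftrightarrow> SBTrust_thm (imps L c)"
  by (intro iffI; erule thm_taut1; simp add: teval_imps teval_limp)

lemma der_taut1: "\<Phi> \<turnstile> x \<Longrightarrow> (\<And>f. teval f x \<Longrightarrow> teval f y) \<Longrightarrow> \<Phi> \<turnstile> y"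
  by (rule MPd[of _ x], assumption, rule Thm, rule SBTrust_thm.TAUT, auto simp: tautology_def)

lemma der_taut2: "\<Phi> \<turnstile> x \<Longrightarrow> \<Phi> \<turnstile> y \<Longrightarrow> (\<And>f. teval f x \<Longrightarrow> teval f y \<Longrightarrow> teval f z) \<Longrightarrow> \<Phi> \<turnstile> z"
  apply (rule MPd[of _ y], assumption)
  apply (rule MPd[of _ x], assumption)
  apply (rule Thm, rule SBTrust_thm.TAUT, auto simp: tautology_def)
  done

lemma der_list: "\<Phi> \<turnstile> a \<Longrightarrow> \<exists>L. set L \<subseteq> \<Phi> \<and> SBTrust_thm (imps L a)"
proof (induction rule: derivable.induct)
  case (Assm a \<Phi>)
  show ?case by (rule exI[of _ "[a]"]) (auto intro!: SBTrust_thm.TAUT simp: tautology_def Assm)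
next
  case (Thm a \<Phi>)
  then show ?case by (intro exI[of _ "[]"]) auto
next
  case (MPd \<Phi> a b)
  then obtain L1 L2 where "set L1 \<subseteq> \<Phi>" "SBTrust_thm (imps L1 a)" "set L2 \<subseteq> \<Phi>" "SBTrust_thm (imps L2 (TImp a b))"
    by blast
  have "SBTrust_thm (imps (L1 @ L2) b)"
    by (rule thm_taut2[OF \<open>SBTrust_thm (imps L1 a)\<close> \<open>SBTrust_thm (imps L2 (TImp a b))\<close>])
       (auto simp: teval_imps)
  then show ?case using \<open>set L1 \<subseteq> \<Phi>\<close> \<open>set L2 \<subseteq> \<Phi>\<close>
    by (intro exI[of _ "L1 @ L2"]) auto
qed

lemma list_der: "set L \<subseteq> \<Phi> \<Longrightarrow> SBTrust_thm (imps L a) \<Longrightarrow> \<Phi> \<turnstile> a"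
proof (induction L arbitrary: a)
  case Nil
  then show ?case by (auto intro: Thm)
next
  case (Cons x L)
  have "SBTrust_thm (imps L (TImp x a))"
    using Cons.prems(2) by (auto elim!: thm_taut1 simp: teval_imps)
  then have "\<Phi> \<turnstile> TImp x a" using Cons by auto
  then show ?case using Cons.prems(1) by (auto intro: MPd Assm)
qed

lemma der_mono: "\<Phi> \<turnstile> a \<Longrightarrow> \<Phi> \<subseteq> \<Psi> \<Longrightarrow> \<Psi> \<turnstile> a"
  by (induction rule: derivable.induct) (auto intro: derivable.intros)

lemma deduction: "insert b \<Phi> \<turnstile> a \<Longrightarrow> \<Phi> \<turnstile> TImp b a"
proof -
  assume "insert b \<Phi> \<turnstile> a"
  then obtain L where L: "set L \<subseteq> insert b \<Phi>" "SBTrust_thm (imps L a)" using der_list by blast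
  have "SBTrust_thm (imps (filter (\<lambda>x. x \<noteq> b) L) (TImp b a))"
    using L(2) by (auto elim!: thm_taut1 simp: teval_imps)
  moreover have "set (filter (\<lambda>x. x \<noteq> b) L) \<subseteq> \<Phi>" using L(1) by auto
  ultimately show ?thesis using list_der by blast
qed

definition consistent :: "tform set \<Rightarrow> bool" where
  "consistent \<Phi> \<longleftrightarrow> \<not> \<Phi> \<turnstile> TBot"

definition mcs :: "tform set \<Rightarrow> bool" where
  "mcs \<Gamma> \<longleftrightarrow> consistent \<Gamma> \<and> (\<forall>a. a \<in> \<Gamma> \<or> TNot a \<in> \<Gamma>)"

lemma finite_chain_bound:
  assumes "finite F" "F \<subseteq> \<Union>C" "C \<noteq> {}" "chain\<^sub>\<subseteq> C"
  shows "\<exists>X\<in>C. F \<subseteq> X"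
  using assms
proof (induction F rule: finite_induct)
  case empty then show ?case by auto
next
  case (insert x F)
  then obtain X where X: "X \<in> C" "F \<subseteq> X" by auto
  obtain Y where Y: "Y \<in> C" "x \<in> Y" using insert.prems by auto
  have "X \<subseteq> Y \<or> Y \<subseteq> X" using X(1) Y(1) insert.prems(3) unfolding chain_subset_def by blast
  then show ?case using X Y by blast
qed

lemma lindenbaum:
  assumes "consistent \<Sigma>"
  shows "\<exists>\<Gamma>. \<Sigma> \<subseteq> \<Gamma> \<and> mcs \<Gamma>"
proof -
  let ?A = "{\<Gamma>. \<Sigma> \<subseteq> \<Gamma> \<and> consistent \<Gamma>}"
  have "\<forall>C\<in>chains ?A. \<exists>U\<in>?A. \<forall>X\<in>C. X \<subseteq> U"
  proof
    fix C assume C: "C \<in> chains ?A"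
    show "\<exists>U\<in>?A. \<forall>X\<in>C. X \<subseteq> U"
    proof (cases "C = {}")
      case True then show ?thesis using assms by auto
    next
      case False
      have "consistent (\<Union>C)"
      proof (rule ccontr)
        assume "\<not> consistent (\<Union>C)"
        then obtain L where L: "set L \<subseteq> \<Union>C" "SBTrust_thm (imps L TBot)"
          unfolding consistent_def using der_list by blast
        then obtain X where "X \<in> C" "set L \<subseteq> X"
          using finite_chain_bound[of "set L" C] False C unfolding chains_def by auto
        then have "X \<turnstile> TBot" using L list_der by blast
        then show False using C \<open>X \<in> C\<close> unfolding chains_def consistent_def by auto
      qed
      moreover have "\<Sigma> \<subseteq> \<Union>C" using False C unfolding chains_def by auto
      ultimately show ?thesis by (intro bexI[of _ "\<Union>C"]) auto
    qed
  qed
  from Zorn_Lemma2[OF this] obtain M where M: "M \<in> ?A" "\<forall>X\<in>?A. M \<subseteq> X \<longrightarrow> X = M" by blast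
  have "\<forall>a. a \<in> M \<or> TNot a \<in> M"
  proof (intro allI)
    fix a
    show "a \<in> M \<or> TNot a \<in> M"
    proof (rule ccontr)
      assume na: "\<not> (a \<in> M \<or> TNot a \<in> M)"
      have "\<not> consistent (insert a M)"
      proof
        assume "consistent (insert a M)"
        then have "insert a M \<in> ?A" using M(1) by auto
        then have "insert a M = M" using M(2) by blast
        then show False using na by auto
      qed
      then have 1: "M \<turnstile> TImp a TBot" unfolding consistent_def by (rule deduction[OF notnotD])
      have "\<not> consistent (insert (TNot a) M)"
      proof
        assume "consistent (insert (TNot a) M)"
        then have "insert (TNot a) M \<in> ?A" using M(1) by auto
        then have "insert (TNot a) M = M" using M(2) by blast
        then show False using na by auto
      qed
      then have 2: "M \<turnstile> TImp (TNot a) TBot" unfolding consistent_def by (rule deduction[OF notnotD])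
      have "M \<turnstile> TBot" using der_taut2[OF 1 2] by auto
      then show False using M unfolding consistent_def by auto
    qed
  qed
  then show ?thesis using M unfolding mcs_def by auto
qed

lemma mcs_closed: "mcs \<Gamma> \<Longrightarrow> \<Gamma> \<turnstile> a \<Longrightarrow> a \<in> \<Gamma>"
proof (rule ccontr)
  assume "mcs \<Gamma>" "\<Gamma> \<turnstile> a" "a \<notin> \<Gamma>"
  then have "\<Gamma> \<turnstile> TNot a" unfolding mcs_def by (auto intro: Assm)
  have "\<Gamma> \<turnstile> TBot" by (rule der_taut2[OF \<open>\<Gamma> \<turnstile> a\<close> \<open>\<Gamma> \<turnstile> TNot a\<close>]) simp
  then show False using \<open>mcs \<Gamma>\<close> unfolding mcs_def consistent_def by auto
qed

lemma mcs_thm: "mcs \<Gamma> \<Longrightarrow> SBTrust_thm a \<Longrightarrow> a \<in> \<Gamma>"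
  by (rule mcs_closed) (auto intro: Thm)

lemma mcs_bot: "mcs \<Gamma> \<Longrightarrow> TBot \<notin> \<Gamma>"
  unfolding mcs_def consistent_def by (auto intro: Assm)

lemma mcs_taut1: "mcs \<Gamma> \<Longrightarrow> x \<in> \<Gamma> \<Longrightarrow> (\<And>f. teval f x \<Longrightarrow> teval f y) \<Longrightarrow> y \<in> \<Gamma>"
  by (meson Assm der_taut1 mcs_closed)

lemma mcs_taut2: "mcs \<Gamma> \<Longrightarrow> x \<in> \<Gamma> \<Longrightarrow> y \<in> \<Gamma> \<Longrightarrow> (\<And>f. teval f x \<Longrightarrow> teval f y \<Longrightarrow> teval f z) \<Longrightarrow> z \<in> \<Gamma>"
  by (meson Assm der_taut2 mcs_closed)

lemma mcs_not: "mcs \<Gamma> \<Longrightarrow> TNot a \<in> \<Gamma> \<longleftrightarrow> a \<notin> \<Gamma>"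
proof
  assume "mcs \<Gamma>" "TNot a \<in> \<Gamma>"
  show "a \<notin> \<Gamma>"
  proof
    assume "a \<in> \<Gamma>"
    have "TBot \<in> \<Gamma>" by (rule mcs_taut2[OF \<open>mcs \<Gamma>\<close> \<open>a \<in> \<Gamma>\<close> \<open>TNot a \<in> \<Gamma>\<close>]) simp
    then show False using mcs_bot \<open>mcs \<Gamma>\<close> by auto
  qed
next
  assume "mcs \<Gamma>" "a \<notin> \<Gamma>" then show "TNot a \<in> \<Gamma>" unfolding mcs_def by auto
qed

lemma mcs_and: "mcs \<Gamma> \<Longrightarrow> TAnd a b \<in> \<Gamma> \<longleftrightarrow> a \<in> \<Gamma> \<and> b \<in> \<Gamma>"
  apply (rule iffI)
   apply (rule conjI)
    apply (erule mcs_taut1, assumption, simp)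
   apply (erule mcs_taut1, assumption, simp)
  apply (erule conjE)
  apply (rule mcs_taut2[of _ a b], assumption+, simp)
  done

lemma mcs_or: "mcs \<Gamma> \<Longrightarrow> TOr a b \<in> \<Gamma> \<longleftrightarrow> a \<in> \<Gamma> \<or> b \<in> \<Gamma>"
proof (intro iffI)
  assume m: "mcs \<Gamma>" and o: "TOr a b \<in> \<Gamma>"
  show "a \<in> \<Gamma> \<or> b \<in> \<Gamma>"
  proof (rule ccontr)
    assume "\<not> (a \<in> \<Gamma> \<or> b \<in> \<Gamma>)"
    then have "TNot a \<in> \<Gamma>" "TNot b \<in> \<Gamma>" using m mcs_not by auto
    then have "TAnd (TNot a) (TNot b) \<in> \<Gamma>" using m mcs_and by auto
    then have "TBot \<in> \<Gamma>" by (rule mcs_taut2[OF m o]) simp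
    then show False using m mcs_bot by auto
  qed
next
  assume m: "mcs \<Gamma>" and "a \<in> \<Gamma> \<or> b \<in> \<Gamma>"
  then show "TOr a b \<in> \<Gamma>" by (auto elim: mcs_taut1[OF m])
qed

lemma mcs_imp: "mcs \<Gamma> \<Longrightarrow> TImp a b \<in> \<Gamma> \<longleftrightarrow> (a \<in> \<Gamma> \<longrightarrow> b \<in> \<Gamma>)"
proof (intro iffI impI)
  assume m: "mcs \<Gamma>" "TImp a b \<in> \<Gamma>" "a \<in> \<Gamma>"
  show "b \<in> \<Gamma>" by (rule mcs_taut2[OF m(1) m(3) m(2)]) simp
next
  assume m: "mcs \<Gamma>" and h: "a \<in> \<Gamma> \<longrightarrow> b \<in> \<Gamma>"
  show "TImp a b \<in> \<Gamma>"
  proof (cases "a \<in> \<Gamma>")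
    case True then show ?thesis using h by (auto elim: mcs_taut1[OF m])
  next
    case False then have "TNot a \<in> \<Gamma>" using m mcs_not by auto
    then show ?thesis by (rule mcs_taut1[OF m]) simp
  qed
qed

lemma mcs_iff: "mcs \<Gamma> \<Longrightarrow> TIff a b \<in> \<Gamma> \<longleftrightarrow> (a \<in> \<Gamma> \<longleftrightarrow> b \<in> \<Gamma>)"
proof -
  assume m: "mcs \<Gamma>"
  have "TIff a b \<in> \<Gamma> \<longleftrightarrow> TAnd (TImp a b) (TImp b a) \<in> \<Gamma>"
    by (auto elim: mcs_taut1[OF m])
  then show ?thesis using m mcs_and mcs_imp by auto
qed




definition condlits :: "tform set \<Rightarrow> tform set" where
  "condlits \<Delta> = {TCond a b | a b. TCond a b \<in> \<Delta>} \<union> {TNot (TCond a b) | a b. TCond a b \<notin> \<Delta>}"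

definition sameC :: "tform set \<Rightarrow> tform set \<Rightarrow> bool" where
  "sameC \<Delta> \<Delta>' \<longleftrightarrow> (\<forall>a b. TCond a b \<in> \<Delta>' \<longleftrightarrow> TCond a b \<in> \<Delta>)"

definition normal :: "tform set \<Rightarrow> pform \<Rightarrow> bool" where
  "normal \<Delta> \<phi> \<longleftrightarrow> (\<forall>\<psi>. TCond \<phi> \<psi> \<in> \<Delta> \<longrightarrow> emb \<psi> \<in> \<Delta>)"

lemma condlits_sub: "mcs \<Delta> \<Longrightarrow> condlits \<Delta> \<subseteq> \<Delta>"
  unfolding condlits_def using mcs_not by auto

lemma condlits_sameC: "mcs \<Delta>' \<Longrightarrow> condlits \<Delta> \<subseteq> \<Delta>' \<Longrightarrow> sameC \<Delta> \<Delta>'"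
  unfolding condlits_def sameC_def using mcs_not by blast

lemma sameC_condlits: "mcs \<Delta>' \<Longrightarrow> sameC \<Delta> \<Delta>' \<Longrightarrow> condlits \<Delta> \<subseteq> \<Delta>'"
  unfolding condlits_def sameC_def using mcs_not by auto

lemma condlits_literal: "l \<in> condlits \<Delta> \<Longrightarrow> is_literal l"
  unfolding condlits_def is_literal_def by auto

lemma CV:
  assumes m: "mcs \<Delta>" and cv: "\<And>\<Delta>'. mcs \<Delta>' \<Longrightarrow> sameC \<Delta> \<Delta>' \<Longrightarrow> emb \<theta> \<in> \<Delta>'"
  shows "TCond (PNot \<theta>) PBot \<in> \<Delta>"
proof -
  have "\<not> consistent (insert (TNot (emb \<theta>)) (condlits \<Delta>))"
  proof
    assume "consistent (insert (TNot (emb \<theta>)) (condlits \<Delta>))"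
    then obtain \<Delta>' where "insert (TNot (emb \<theta>)) (condlits \<Delta>) \<subseteq> \<Delta>'" "mcs \<Delta>'"
      using lindenbaum by blast
    then show False using cv[of \<Delta>'] condlits_sameC mcs_not by auto
  qed
  then have "condlits \<Delta> \<turnstile> TImp (TNot (emb \<theta>)) TBot"
    unfolding consistent_def by (intro deduction) auto
  then have "condlits \<Delta> \<turnstile> emb \<theta>" by (rule der_taut1) simp
  then obtain L where L: "set L \<subseteq> condlits \<Delta>" "SBTrust_thm (imps L (emb \<theta>))"
    using der_list by blast
  then have "SBTrust_thm (limp L (emb \<theta>))" using thm_limp_imps by auto
  then have "SBTrust_thm (limp L (TCond (PNot \<theta>) PBot))"
    using L(1) condlits_literal by (intro S5F) auto
  then have "SBTrust_thm (imps L (TCond (PNot \<theta>) PBot))" using thm_limp_imps by auto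
  then have "\<Delta> \<turnstile> TCond (PNot \<theta>) PBot"
    using L(1) condlits_sub[OF m] by (intro list_der[of L]) auto
  then show ?thesis using mcs_closed m by auto
qed

lemma RCKm:
  assumes m: "mcs \<Delta>" and P: "\<forall>p\<in>set Ps. TCond \<phi> p \<in> \<Delta>"
    and t: "SBTrust_thm (imps (map emb Ps) (emb q))"
  shows "TCond \<phi> q \<in> \<Delta>"
proof -
  have "SBTrust_thm (limp (map emb Ps) (emb q))" using t thm_limp_imps by auto
  then have "SBTrust_thm (limp (map (TCond \<phi>) Ps) (TCond \<phi> q))" by (rule RCK)
  then have "SBTrust_thm (imps (map (TCond \<phi>) Ps) (TCond \<phi> q))" using thm_limp_imps by auto
  then have "\<Delta> \<turnstile> TCond \<phi> q" using P by (intro list_der[of "map (TCond \<phi>) Ps"]) auto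
  then show ?thesis using mcs_closed m by auto
qed

lemma CVequiv:
  assumes m: "mcs \<Delta>" and cv: "\<And>\<Delta>'. mcs \<Delta>' \<Longrightarrow> sameC \<Delta> \<Delta>' \<Longrightarrow> (emb \<phi> \<in> \<Delta>' \<longleftrightarrow> emb \<phi>' \<in> \<Delta>')"
  shows "TCond \<phi> \<chi> \<in> \<Delta> \<longleftrightarrow> TCond \<phi>' \<chi> \<in> \<Delta>"
proof -
  have "TCond (PNot (PIff \<phi> \<phi>')) PBot \<in> \<Delta>"
    by (rule CV[OF m]) (use cv mcs_iff in auto)
  moreover have "TImp (TCond (PNot (PIff \<phi> \<phi>')) PBot) (TIff (TCond \<phi> \<chi>) (TCond \<phi>' \<chi>)) \<in> \<Delta>"
    using mcs_thm[OF m] LLplus by blast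
  ultimately have "TIff (TCond \<phi> \<chi>) (TCond \<phi>' \<chi>) \<in> \<Delta>" using mcs_imp m by blast
  then show ?thesis using mcs_iff m by blast
qed

lemma cv_cond:
  assumes m: "mcs \<Delta>" and cv: "\<And>\<Delta>'. mcs \<Delta>' \<Longrightarrow> sameC \<Delta> \<Delta>' \<Longrightarrow> emb \<theta> \<in> \<Delta>'"
  shows "TCond \<phi> \<theta> \<in> \<Delta>"
proof -
  have "TCond \<phi> \<theta> \<in> \<Delta> \<longleftrightarrow> TCond (PAnd \<phi> \<theta>) \<theta> \<in> \<Delta>"
    by (rule CVequiv[OF m]) (use cv mcs_and in auto)
  moreover have "TCond (PAnd \<phi> \<theta>) \<theta> \<in> \<Delta>"
  proof (rule RCKm[OF m, of "[PAnd \<phi> \<theta>]"])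
    show "\<forall>p\<in>set [PAnd \<phi> \<theta>]. TCond (PAnd \<phi> \<theta>) p \<in> \<Delta>" using mcs_thm[OF m ID] by auto
    show "SBTrust_thm (imps (map emb [PAnd \<phi> \<theta>]) (emb \<theta>))"
      by (rule TAUT) (simp add: tautology_def)
  qed
  ultimately show ?thesis by auto
qed

lemma split_lst:
  assumes "set L \<subseteq> A \<union> emb ` P"
  shows "\<exists>L1 Ps. set L1 \<subseteq> A \<and> set Ps \<subseteq> P \<and> (\<forall>f. teval f (imps L c) = teval f (imps L1 (imps (map emb Ps) c)))"
  using assms
proof (induction L)
  case Nil
  then show ?case by (intro exI[of _ "[]"]) auto
next
  case (Cons x L)
  then obtain L1 Ps where IH: "set L1 \<subseteq> A" "set Ps \<subseteq> P" "\<forall>f. teval f (imps L c) = teval f (imps L1 (imps (map emb Ps) c))"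
    by auto
  show ?case
  proof (cases "x \<in> A")
    case True
    then show ?thesis using IH by (intro exI[of _ "x # L1"] exI[of _ Ps]) (auto simp: teval_imps)
  next
    case False
    then obtain p where "p \<in> P" "x = emb p" using Cons.prems by auto
    then show ?thesis using IH by (intro exI[of _ L1] exI[of _ "p # Ps"]) (auto simp: teval_imps)
  qed
qed

lemma witness:
  assumes m: "mcs \<Delta>" and n: "TCond \<phi> \<psi> \<notin> \<Delta>"
  shows "\<exists>\<Delta>'. mcs \<Delta>' \<and> sameC \<Delta> \<Delta>' \<and> normal \<Delta>' \<phi> \<and> emb \<psi> \<notin> \<Delta>'"
proof (cases "consistent (insert (TNot (emb \<psi>)) (condlits \<Delta> \<union> emb ` {p. TCond \<phi> p \<in> \<Delta>}))")
  case True
  then obtain \<Delta>' where D: "insert (TNot (emb \<psi>)) (condlits \<Delta> \<union> emb ` {p. TCond \<phi> p \<in> \<Delta>}) \<subseteq> \<Delta>'" "mcs \<Delta>'"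
    using lindenbaum by blast
  then have s: "sameC \<Delta> \<Delta>'" using condlits_sameC by auto
  then have "normal \<Delta>' \<phi>" using D unfolding normal_def sameC_def by auto
  then show ?thesis using D s mcs_not by auto
next
  case False
  let ?P = "{p. TCond \<phi> p \<in> \<Delta>}"
  have "condlits \<Delta> \<union> emb ` ?P \<turnstile> TImp (TNot (emb \<psi>)) TBot"
    using False unfolding consistent_def by (intro deduction) auto
  then have "condlits \<Delta> \<union> emb ` ?P \<turnstile> emb \<psi>" by (rule der_taut1) simp
  then obtain L where L: "set L \<subseteq> condlits \<Delta> \<union> emb ` ?P" "SBTrust_thm (imps L (emb \<psi>))"
    using der_list by blast
  then obtain L1 Ps where S: "set L1 \<subseteq> condlits \<Delta>" "set Ps \<subseteq> ?P"
    "\<forall>f. teval f (imps L (emb \<psi>)) = teval f (imps L1 (imps (map emb Ps) (emb \<psi>)))"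
    using split_lst by blast
  have T: "SBTrust_thm (imps L1 (emb (pimps Ps \<psi>)))"
    using L(2) S(3) by (auto elim!: thm_taut1 simp: emb_pimps)
  have "TCond \<phi> (pimps Ps \<psi>) \<in> \<Delta>"
  proof (rule cv_cond[OF m])
    fix \<Delta>' assume "mcs \<Delta>'" "sameC \<Delta> \<Delta>'"
    then have "set L1 \<subseteq> \<Delta>'" using S(1) sameC_condlits by blast
    then have "\<Delta>' \<turnstile> emb (pimps Ps \<psi>)" using T list_der by blast
    then show "emb (pimps Ps \<psi>) \<in> \<Delta>'" using mcs_closed \<open>mcs \<Delta>'\<close> by blast
  qed
  then have "TCond \<phi> \<psi> \<in> \<Delta>"
  proof -
    assume h: "TCond \<phi> (pimps Ps \<psi>) \<in> \<Delta>"
    show ?thesis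
    proof (rule RCKm[OF m, of "Ps @ [pimps Ps \<psi>]"])
      show "\<forall>p\<in>set (Ps @ [pimps Ps \<psi>]). TCond \<phi> p \<in> \<Delta>" using h S(2) by auto
      show "SBTrust_thm (imps (map emb (Ps @ [pimps Ps \<psi>])) (emb \<psi>))"
        by (rule TAUT) (auto simp: tautology_def teval_imps emb_pimps)
    qed
  qed
  then show ?thesis using n by auto
qed

lemma boxlist: "SBTrust_thm (imps L a) \<Longrightarrow> SBTrust_thm (imps (map TB L) (TB a))"
proof (induction L arbitrary: a)
  case Nil
  then show ?case by (auto intro: NecB)
next
  case (Cons x L)
  have "SBTrust_thm (imps L (TImp x a))" using Cons.prems by (auto elim!: thm_taut1 simp: teval_imps)
  then have "SBTrust_thm (imps (map TB L) (TB (TImp x a)))" using Cons.IH by auto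
  from thm_taut2[OF this KB[of x a]]
  show ?case by (auto simp: teval_imps)
qed

lemma box_witness:
  assumes m: "mcs \<Delta>" and n: "TB a \<notin> \<Delta>"
  shows "\<exists>\<Delta>'. mcs \<Delta>' \<and> {b. TB b \<in> \<Delta>} \<subseteq> \<Delta>' \<and> a \<notin> \<Delta>'"
proof (cases "consistent (insert (TNot a) {b. TB b \<in> \<Delta>})")
  case True
  then obtain \<Delta>' where "insert (TNot a) {b. TB b \<in> \<Delta>} \<subseteq> \<Delta>'" "mcs \<Delta>'" using lindenbaum by blast
  then show ?thesis using mcs_not by auto
next
  case False
  have "{b. TB b \<in> \<Delta>} \<turnstile> TImp (TNot a) TBot"
    using False unfolding consistent_def by (intro deduction) auto
  then have "{b. TB b \<in> \<Delta>} \<turnstile> a" by (rule der_taut1) simp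
  then obtain L where L: "set L \<subseteq> {b. TB b \<in> \<Delta>}" "SBTrust_thm (imps L a)" using der_list by blast
  then have "SBTrust_thm (imps (map TB L) (TB a))" using boxlist by auto
  then have "\<Delta> \<turnstile> TB a" using L(1) by (intro list_der[of "map TB L"]) auto
  then show ?thesis using n mcs_closed m by auto
qed

lemma box_serial:
  assumes m: "mcs \<Delta>"
  shows "\<exists>\<Delta>'. mcs \<Delta>' \<and> {b. TB b \<in> \<Delta>} \<subseteq> \<Delta>'"
proof -
  have "TB (TNot TBot) \<in> \<Delta>" by (rule mcs_thm[OF m], rule NecB, rule TAUT) (simp add: tautology_def)
  moreover have "TImp (TB TBot) (TNot (TB (TNot TBot))) \<in> \<Delta>" using mcs_thm[OF m DB] .
  ultimately have "TB TBot \<notin> \<Delta>" using m mcs_imp mcs_not by blast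
  then show ?thesis using box_witness[OF m] by blast
qed




type_synonym cw = "tform set \<times> pform option"

definition Wd :: "cw set" where
  "Wd = {(\<Delta>, None) | \<Delta>. mcs \<Delta>} \<union> {(\<Delta>, Some \<chi>) | \<Delta> \<chi>. mcs \<Delta> \<and> normal \<Delta> \<chi>}"

definition cellof :: "tform set \<Rightarrow> cw set" where
  "cellof \<Delta> = {w \<in> Wd. sameC \<Delta> (fst w)}"

definition Pr :: "cw \<Rightarrow> cw \<Rightarrow> bool" where
  "Pr v w = (case snd w of
      Some \<chi> \<Rightarrow> emb \<chi> \<notin> fst v \<and> (case snd v of Some \<chi>' \<Rightarrow> emb \<chi>' \<in> fst w | None \<Rightarrow> True)
    | None \<Rightarrow> (case snd v of Some \<chi>' \<Rightarrow> emb \<chi>' \<in> fst w | None \<Rightarrow> False))"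

definition CM :: "cw trust_model" where
  "CM = \<lparr> St = Wd, Cells = {cellof \<Delta> | \<Delta>. mcs \<Delta>},
          Pref = (\<lambda>C v w. v \<in> C \<and> w \<in> C \<and> Pr v w),
          Rel = (\<lambda>v w. v \<in> Wd \<and> w \<in> Wd \<and> {b. TB b \<in> fst v} \<subseteq> fst w),
          Val = (\<lambda>p. {w \<in> Wd. TVar p \<in> fst w}) \<rparr>"

lemma CM_simps: "St CM = Wd" "Cells CM = {cellof \<Delta> | \<Delta>. mcs \<Delta>}"
  "Pref CM C v w = (v \<in> C \<and> w \<in> C \<and> Pr v w)"
  "Rel CM v w = (v \<in> Wd \<and> w \<in> Wd \<and> {b. TB b \<in> fst v} \<subseteq> fst w)"
  "Val CM p = {w \<in> Wd. TVar p \<in> fst w}"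
  by (auto simp: CM_def)

lemma Wd_mcs: "w \<in> Wd \<Longrightarrow> mcs (fst w)"
  unfolding Wd_def by auto

lemma Wd_normal: "(\<Delta>, Some \<chi>) \<in> Wd \<Longrightarrow> normal \<Delta> \<chi>"
  unfolding Wd_def by auto

lemma Wd_None: "mcs \<Delta> \<Longrightarrow> (\<Delta>, None) \<in> Wd"
  unfolding Wd_def by auto

lemma Wd_Some: "mcs \<Delta> \<Longrightarrow> normal \<Delta> \<chi> \<Longrightarrow> (\<Delta>, Some \<chi>) \<in> Wd"
  unfolding Wd_def by auto

lemma psat_CM: "w \<in> Wd \<Longrightarrow> psat CM w \<phi> \<longleftrightarrow> emb \<phi> \<in> fst w"
proof (induction \<phi>)
  case PBot then show ?case using mcs_bot Wd_mcs by auto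
next
  case (PVar x) then show ?case by (simp add: CM_simps)
next
  case (PAnd \<phi>1 \<phi>2) then show ?case using mcs_and Wd_mcs by auto
next
  case (POr \<phi>1 \<phi>2) then show ?case using mcs_or Wd_mcs by auto
next
  case (PImp \<phi>1 \<phi>2) then show ?case using mcs_imp Wd_mcs by auto
next
  case (PIff \<phi>1 \<phi>2) then show ?case using mcs_iff Wd_mcs by auto
next
  case (PNot \<phi>) then show ?case using mcs_not Wd_mcs by auto
qed

lemma sameC_refl: "sameC \<Delta> \<Delta>" and sameC_sym: "sameC \<Delta> \<Delta>' \<Longrightarrow> sameC \<Delta>' \<Delta>"
  and sameC_trans: "sameC \<Delta> \<Delta>' \<Longrightarrow> sameC \<Delta>' \<Delta>'' \<Longrightarrow> sameC \<Delta> \<Delta>''"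
  unfolding sameC_def by auto

lemma cellof_eq: "w \<in> cellof \<Delta> \<Longrightarrow> cellof \<Delta> = cellof (fst w)"
  unfolding cellof_def using sameC_sym sameC_trans by blast

lemma in_own_cell: "w \<in> Wd \<Longrightarrow> w \<in> cellof (fst w)"
  unfolding cellof_def using sameC_refl by auto

lemma ext_cell: "ext CM (cellof \<Delta>) \<phi> = {w \<in> cellof \<Delta>. emb \<phi> \<in> fst w}"
  unfolding ext_def cellof_def using psat_CM by auto

lemma most_cell: "most CM (cellof \<Delta>) X = {s \<in> X. \<forall>v\<in>X. (v \<in> cellof \<Delta> \<and> s \<in> cellof \<Delta> \<and> Pr v s) \<longrightarrow> Pr s v}"
  unfolding most_def by (auto simp: CM_simps)

lemma tagged_most:
  assumes "(\<Delta>', Some \<phi>) \<in> ext CM (cellof \<Delta>) \<phi>"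
  shows "(\<Delta>', Some \<phi>) \<in> most CM (cellof \<Delta>) (ext CM (cellof \<Delta>) \<phi>)"
  using assms unfolding most_cell ext_cell by (auto simp: Pr_def)

lemma normal_emb: "mcs \<Delta>' \<Longrightarrow> normal \<Delta>' \<phi> \<Longrightarrow> emb \<phi> \<in> \<Delta>'"
  unfolding normal_def using mcs_thm ID by blast

lemma exists_tagged:
  assumes m: "mcs \<Delta>" and n: "TCond \<phi> \<psi> \<notin> \<Delta>"
  shows "\<exists>v \<in> most CM (cellof \<Delta>) (ext CM (cellof \<Delta>) \<phi>). emb \<psi> \<notin> fst v"
proof -
  obtain \<Delta>' where D: "mcs \<Delta>'" "sameC \<Delta> \<Delta>'" "normal \<Delta>' \<phi>" "emb \<psi> \<notin> \<Delta>'"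
    using witness[OF m n] by blast
  have "(\<Delta>', Some \<phi>) \<in> cellof \<Delta>"
    unfolding cellof_def using D Wd_Some by auto
  then have "(\<Delta>', Some \<phi>) \<in> ext CM (cellof \<Delta>) \<phi>"
    unfolding ext_cell using D normal_emb by auto
  then have "(\<Delta>', Some \<phi>) \<in> most CM (cellof \<Delta>) (ext CM (cellof \<Delta>) \<phi>)" by (rule tagged_most)
  then show ?thesis using D(4) by (intro bexI[of _ "(\<Delta>', Some \<phi>)"]) auto
qed

lemma ST_cell:
  assumes "mcs \<Delta>" "w \<in> cellof \<Delta>" "emb \<phi> \<in> fst w"
  shows "TCond \<phi> PBot \<notin> \<Delta>"
proof
  assume "TCond \<phi> PBot \<in> \<Delta>"
  then have c: "TCond \<phi> PBot \<in> fst w" using assms(2) unfolding cellof_def sameC_def by auto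
  have m: "mcs (fst w)" using assms(2) Wd_mcs unfolding cellof_def by auto
  have "TImp (TCond \<phi> PBot) (TNot (emb \<phi>)) \<in> fst w" using mcs_thm[OF m ST] .
  then show False using c assms(3) m mcs_imp mcs_not by blast
qed

lemma most_normal:
  assumes m: "mcs \<Delta>" and w: "w \<in> most CM (cellof \<Delta>) (ext CM (cellof \<Delta>) \<phi>)"
    and c: "TCond \<phi> \<psi> \<in> \<Delta>"
  shows "emb \<psi> \<in> fst w"
proof -
  have wC: "w \<in> cellof \<Delta>" and wp: "emb \<phi> \<in> fst w"
    using w unfolding most_def ext_cell by auto
  have wW: "w \<in> Wd" and sc: "sameC \<Delta> (fst w)" using wC unfolding cellof_def by auto
  have mw: "mcs (fst w)" using wW Wd_mcs by auto
  have dom: "\<And>v. v \<in> cellof \<Delta> \<Longrightarrow> emb \<phi> \<in> fst v \<Longrightarrow> Pr v w \<Longrightarrow> Pr w v"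
    using w wC unfolding most_cell ext_cell by auto
  show ?thesis
  proof (cases "snd w")
    case None
    have "TCond \<phi> PBot \<notin> \<Delta>" using ST_cell[OF m wC wp] .
    then obtain v where v: "v \<in> most CM (cellof \<Delta>) (ext CM (cellof \<Delta>) \<phi>)" using exists_tagged[OF m] by blast
    have "False"
    proof -
      obtain \<Delta>' where D: "mcs \<Delta>'" "sameC \<Delta> \<Delta>'" "normal \<Delta>' \<phi>"
        using witness[OF m \<open>TCond \<phi> PBot \<notin> \<Delta>\<close>] by blast
      let ?v = "(\<Delta>', Some \<phi>)"
      have vC: "?v \<in> cellof \<Delta>" unfolding cellof_def using D Wd_Some by auto
      have "emb \<phi> \<in> \<Delta>'" using normal_emb D by auto
      moreover have "Pr ?v w" using None wp unfolding Pr_def by auto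
      moreover have "\<not> Pr w ?v" using wp unfolding Pr_def by auto
      ultimately show False using dom[OF vC] by auto
    qed
    then show ?thesis ..
  next
    case (Some \<chi>)
    have incl: "\<And>\<Delta>'. mcs \<Delta>' \<Longrightarrow> sameC \<Delta> \<Delta>' \<Longrightarrow> emb \<phi> \<in> \<Delta>' \<Longrightarrow> emb \<chi> \<in> \<Delta>'"
    proof (rule ccontr)
      fix \<Delta>' assume D: "mcs \<Delta>'" "sameC \<Delta> \<Delta>'" "emb \<phi> \<in> \<Delta>'" "emb \<chi> \<notin> \<Delta>'"
      let ?v = "(\<Delta>', None)"
      have vC: "?v \<in> cellof \<Delta>" unfolding cellof_def using D Wd_None by auto
      have "Pr ?v w" using Some D unfolding Pr_def by auto
      moreover have "\<not> Pr w ?v" using Some D unfolding Pr_def by auto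
      ultimately show False using dom[OF vC] D by auto
    qed
    have "TCond \<phi> \<psi> \<in> \<Delta> \<longleftrightarrow> TCond (PAnd \<chi> \<phi>) \<psi> \<in> \<Delta>"
      by (rule CVequiv[OF m]) (use incl mcs_and in auto)
    then have "TCond (PAnd \<chi> \<phi>) \<psi> \<in> \<Delta>" using c by auto
    moreover have "TImp (TCond (PAnd \<chi> \<phi>) \<psi>) (TCond \<chi> (PImp \<phi> \<psi>)) \<in> \<Delta>" using mcs_thm[OF m SH] .
    ultimately have "TCond \<chi> (PImp \<phi> \<psi>) \<in> \<Delta>" using m mcs_imp by blast
    then have "TCond \<chi> (PImp \<phi> \<psi>) \<in> fst w" using sc unfolding sameC_def by auto
    moreover have "normal (fst w) \<chi>" using wW Some Wd_normal by (metis prod.collapse)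
    ultimately have "emb (PImp \<phi> \<psi>) \<in> fst w" unfolding normal_def by auto
    then show ?thesis using wp mw mcs_imp by auto
  qed
qed

lemma cond_truth:
  assumes m: "mcs \<Delta>"
  shows "most CM (cellof \<Delta>) (ext CM (cellof \<Delta>) \<phi>) \<subseteq> ext CM (cellof \<Delta>) \<psi> \<longleftrightarrow> TCond \<phi> \<psi> \<in> \<Delta>"
proof
  assume "TCond \<phi> \<psi> \<in> \<Delta>"
  then show "most CM (cellof \<Delta>) (ext CM (cellof \<Delta>) \<phi>) \<subseteq> ext CM (cellof \<Delta>) \<psi>"
    using most_normal[OF m] unfolding ext_cell most_def by auto
next
  assume h: "most CM (cellof \<Delta>) (ext CM (cellof \<Delta>) \<phi>) \<subseteq> ext CM (cellof \<Delta>) \<psi>"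
  show "TCond \<phi> \<psi> \<in> \<Delta>"
  proof (rule ccontr)
    assume "TCond \<phi> \<psi> \<notin> \<Delta>"
    then show False using exists_tagged[OF m] h unfolding ext_cell by blast
  qed
qed

lemma truth: "w \<in> Wd \<Longrightarrow> tsat CM w a \<longleftrightarrow> a \<in> fst w"
proof (induction a arbitrary: w)
  case TBot then show ?case using mcs_bot Wd_mcs by auto
next
  case (TVar x) then show ?case by (simp add: CM_simps)
next
  case (TCond \<phi> \<psi>)
  have mw: "mcs (fst w)" using TCond Wd_mcs by auto
  have "tsat CM w (TCond \<phi> \<psi>) \<longleftrightarrow>
        most CM (cellof (fst w)) (ext CM (cellof (fst w)) \<phi>) \<subseteq> ext CM (cellof (fst w)) \<psi>"
  proof
    assume "tsat CM w (TCond \<phi> \<psi>)"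
    then show "most CM (cellof (fst w)) (ext CM (cellof (fst w)) \<phi>) \<subseteq> ext CM (cellof (fst w)) \<psi>"
      using mw in_own_cell[OF TCond] by (auto simp: CM_simps)
  next
    assume "most CM (cellof (fst w)) (ext CM (cellof (fst w)) \<phi>) \<subseteq> ext CM (cellof (fst w)) \<psi>"
    moreover have "\<And>C. C \<in> Cells CM \<Longrightarrow> w \<in> C \<Longrightarrow> C = cellof (fst w)"
    proof -
      fix C assume "C \<in> Cells CM" "w \<in> C"
      then obtain \<Delta> where "C = cellof \<Delta>" by (auto simp: CM_simps)
      then show "C = cellof (fst w)" using cellof_eq[of w \<Delta>] \<open>w \<in> C\<close> by simp
    qed
    ultimately show "tsat CM w (TCond \<phi> \<psi>)" by auto
  qed
  then show ?case using cond_truth[OF mw] by simp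
next
  case (TB a)
  have mw: "mcs (fst w)" using TB Wd_mcs by auto
  show ?case
  proof
    assume h: "tsat CM w (TB a)"
    show "TB a \<in> fst w"
    proof (rule ccontr)
      assume "TB a \<notin> fst w"
      then obtain \<Delta>' where "mcs \<Delta>'" "{b. TB b \<in> fst w} \<subseteq> \<Delta>'" "a \<notin> \<Delta>'" using box_witness[OF mw] by blast
      then show False using h TB.IH[of "(\<Delta>', None)"] Wd_None TB.prems by (auto simp: CM_simps)
    qed
  next
    assume "TB a \<in> fst w"
    then show "tsat CM w (TB a)" using TB.IH by (auto simp: CM_simps)
  qed
next
  case (TAnd a1 a2) then show ?case using mcs_and Wd_mcs by auto
next
  case (TOr a1 a2) then show ?case using mcs_or Wd_mcs by auto
next
  case (TImp a1 a2) then show ?case using mcs_imp Wd_mcs by auto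
next
  case (TIff a1 a2) then show ?case using mcs_iff Wd_mcs by auto
next
  case (TNot a) then show ?case using mcs_not Wd_mcs by auto
qed

lemma CM_model: "trust_model CM"
  unfolding trust_model_def
proof (intro conjI)
  show "\<forall>s t. Rel CM s t \<longrightarrow> s \<in> St CM \<and> t \<in> St CM" by (auto simp: CM_simps)
  show "\<forall>s\<in>St CM. \<exists>t. Rel CM s t"
  proof
    fix s assume "s \<in> St CM"
    then have "s \<in> Wd" "mcs (fst s)" using Wd_mcs by (auto simp: CM_simps)
    then obtain \<Delta>' where "mcs \<Delta>'" "{b. TB b \<in> fst s} \<subseteq> \<Delta>'" using box_serial by blast
    then show "\<exists>t. Rel CM s t" using \<open>s \<in> Wd\<close> Wd_None by (auto simp: CM_simps)
  qed
  show "\<forall>s t u. Rel CM s t \<longrightarrow> Rel CM t u \<longrightarrow> Rel CM s u"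
  proof (intro allI impI)
    fix s t u assume st: "Rel CM s t" and tu: "Rel CM t u"
    have ms: "mcs (fst s)" using st Wd_mcs by (auto simp: CM_simps)
    have "{b. TB b \<in> fst s} \<subseteq> fst u"
    proof
      fix b assume "b \<in> {b. TB b \<in> fst s}"
      then have "TB b \<in> fst s" by auto
      moreover have "TImp (TB b) (TB (TB b)) \<in> fst s" using mcs_thm[OF ms FourB] .
      ultimately have "TB (TB b) \<in> fst s" using ms mcs_imp by blast
      then have "TB b \<in> fst t" using st by (auto simp: CM_simps)
      then show "b \<in> fst u" using tu by (auto simp: CM_simps)
    qed
    then show "Rel CM s u" using st tu by (auto simp: CM_simps)
  qed
  show "is_partition (St CM) (Cells CM)"
    unfolding is_partition_def
  proof (intro conjI)
    show "\<Union> (Cells CM) = St CM"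
    proof
      show "\<Union> (Cells CM) \<subseteq> St CM" by (auto simp: CM_simps cellof_def)
      show "St CM \<subseteq> \<Union> (Cells CM)"
      proof
        fix w assume "w \<in> St CM"
        then have "w \<in> Wd" by (simp add: CM_simps)
        then have "w \<in> cellof (fst w)" "cellof (fst w) \<in> Cells CM"
          using in_own_cell Wd_mcs[OF \<open>w \<in> Wd\<close>] by (auto simp: CM_simps)
        then show "w \<in> \<Union> (Cells CM)" by blast
      qed
    qed
    show "{} \<notin> Cells CM"
    proof
      assume "{} \<in> Cells CM"
      then obtain \<Delta> where "mcs \<Delta>" "cellof \<Delta> = {}" by (auto simp: CM_simps)
      then show False using in_own_cell[OF Wd_None] by fastforce
    qed
    show "\<forall>C\<in>Cells CM. \<forall>D\<in>Cells CM. C \<noteq> D \<longrightarrow> C \<inter> D = {}"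
    proof (intro ballI impI)
      fix C D assume "C \<in> Cells CM" "D \<in> Cells CM" "C \<noteq> D"
      then obtain \<Delta>1 \<Delta>2 where C: "C = cellof \<Delta>1" and D: "D = cellof \<Delta>2" by (auto simp: CM_simps)
      show "C \<inter> D = {}"
      proof (rule ccontr)
        assume "C \<inter> D \<noteq> {}"
        then obtain w where "w \<in> cellof \<Delta>1" "w \<in> cellof \<Delta>2" using C D by auto
        then have "cellof \<Delta>1 = cellof \<Delta>2" using cellof_eq by metis
        then show False using C D \<open>C \<noteq> D\<close> by auto
      qed
    qed
  qed
  show "\<forall>C\<in>Cells CM. \<forall>s t. Pref CM C s t \<longrightarrow> s \<in> C \<and> t \<in> C" by (auto simp: CM_simps)
  show "\<forall>p. Val CM p \<subseteq> St CM" by (auto simp: CM_simps)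
  show "\<forall>C\<in>Cells CM. \<forall>\<phi>. ext CM C \<phi> \<noteq> {} \<longrightarrow> most CM C (ext CM C \<phi>) \<noteq> {}"
  proof (intro ballI allI impI)
    fix C \<phi> assume C: "C \<in> Cells CM" and ne: "ext CM C \<phi> \<noteq> {}"
    then obtain \<Delta> where D: "mcs \<Delta>" "C = cellof \<Delta>" by (auto simp: CM_simps)
    then have "ext CM (cellof \<Delta>) \<phi> \<noteq> {}" using ne by simp
    then obtain w where "w \<in> cellof \<Delta>" "emb \<phi> \<in> fst w" unfolding ext_cell by blast
    then have "TCond \<phi> PBot \<notin> \<Delta>" using ST_cell D by auto
    then show "most CM C (ext CM C \<phi>) \<noteq> {}" using exists_tagged[OF D(1)] D by auto
  qed
qed




definition tmap :: "('a \<Rightarrow> 'b) \<Rightarrow> 'a trust_model \<Rightarrow> 'b trust_model" where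
  "tmap f M = \<lparr> St = f ` St M, Cells = image f ` Cells M,
     Pref = (\<lambda>C x y. \<exists>C0\<in>Cells M. C = f ` C0 \<and> (\<exists>a b. x = f a \<and> y = f b \<and> Pref M C0 a b)),
     Rel = (\<lambda>x y. \<exists>a b. x = f a \<and> y = f b \<and> Rel M a b),
     Val = (\<lambda>p. f ` Val M p) \<rparr>"

lemma tmap_simps: "St (tmap f M) = f ` St M" "Cells (tmap f M) = image f ` Cells M"
  "Pref (tmap f M) C x y = (\<exists>C0\<in>Cells M. C = f ` C0 \<and> (\<exists>a b. x = f a \<and> y = f b \<and> Pref M C0 a b))"
  "Rel (tmap f M) x y = (\<exists>a b. x = f a \<and> y = f b \<and> Rel M a b)"
  "Val (tmap f M) p = f ` Val M p"
  by (auto simp: tmap_def)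

context
  fixes f :: "'a \<Rightarrow> 'b" and M :: "'a trust_model"
  assumes inj: "inj f"
begin

lemma psat_tmap: "psat (tmap f M) (f s) \<phi> = psat M s \<phi>"
  by (induction \<phi>) (auto simp: tmap_simps inj_image_mem_iff[OF inj])

lemma ext_tmap: "ext (tmap f M) (f ` C) \<phi> = f ` ext M C \<phi>"
  unfolding ext_def using psat_tmap by auto

lemma Pref_tmap: "C \<in> Cells M \<Longrightarrow> Pref (tmap f M) (f ` C) (f a) (f b) = Pref M C a b"
  unfolding tmap_simps using inj_image_eq_iff[OF inj] inj injD by metis

lemma most_tmap: "C \<in> Cells M \<Longrightarrow> most (tmap f M) (f ` C) (f ` X) = f ` most M C X"
  unfolding most_def using Pref_tmap inj_image_mem_iff[OF inj] by auto

lemma model_tmap: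
  assumes tm: "trust_model M"
  shows "trust_model (tmap f M)"
  unfolding trust_model_def
proof (intro conjI)
  note T = tm[unfolded trust_model_def]
  show "\<forall>s t. Rel (tmap f M) s t \<longrightarrow> s \<in> St (tmap f M) \<and> t \<in> St (tmap f M)"
    using T by (auto simp: tmap_simps)
  show "\<forall>s\<in>St (tmap f M). \<exists>t. Rel (tmap f M) s t"
  proof
    fix s assume "s \<in> St (tmap f M)"
    then obtain a where a: "a \<in> St M" "s = f a" by (auto simp: tmap_simps)
    then obtain b where "Rel M a b" using T by blast
    then show "\<exists>t. Rel (tmap f M) s t" using a by (auto simp: tmap_simps)
  qed
  show "\<forall>s t u. Rel (tmap f M) s t \<longrightarrow> Rel (tmap f M) t u \<longrightarrow> Rel (tmap f M) s u"
    using T injD[OF inj] by (auto simp: tmap_simps) blast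
  show "is_partition (St (tmap f M)) (Cells (tmap f M))"
  proof -
    have P: "is_partition (St M) (Cells M)" using T by auto
    show ?thesis unfolding is_partition_def tmap_simps
    proof (intro conjI)
      show "\<Union> ((`) f ` Cells M) = f ` St M" using P unfolding is_partition_def
        by (simp add: image_Union[symmetric])
      show "{} \<notin> (`) f ` Cells M" using P unfolding is_partition_def by auto
      show "\<forall>C\<in>(`) f ` Cells M. \<forall>D\<in>(`) f ` Cells M. C \<noteq> D \<longrightarrow> C \<inter> D = {}"
      proof (intro ballI impI)
        fix C' D' assume "C' \<in> (`) f ` Cells M" "D' \<in> (`) f ` Cells M" "C' \<noteq> D'"
        then obtain C D where "C \<in> Cells M" "D \<in> Cells M" "C' = f ` C" "D' = f ` D" "C \<noteq> D" by auto
        then have "C \<inter> D = {}" using P unfolding is_partition_def by blast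
        then show "C' \<inter> D' = {}" using \<open>C' = f ` C\<close> \<open>D' = f ` D\<close> image_Int[OF inj, of C D] by simp
      qed
    qed
  qed
  show "\<forall>C\<in>Cells (tmap f M). \<forall>s t. Pref (tmap f M) C s t \<longrightarrow> s \<in> C \<and> t \<in> C"
    using T by (auto simp: tmap_simps inj_image_eq_iff[OF inj])
  show "\<forall>p. Val (tmap f M) p \<subseteq> St (tmap f M)" using T by (auto simp: tmap_simps image_mono)
  show "\<forall>C\<in>Cells (tmap f M). \<forall>\<phi>. ext (tmap f M) C \<phi> \<noteq> {} \<longrightarrow> most (tmap f M) C (ext (tmap f M) C \<phi>) \<noteq> {}"
    using T by (auto simp: tmap_simps ext_tmap most_tmap)
qed

lemma tsat_tmap:
  assumes tm: "trust_model M"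
  shows "s \<in> St M \<Longrightarrow> tsat (tmap f M) (f s) a = tsat M s a"
proof (induction a arbitrary: s)
  case (TVar x) then show ?case by (auto simp: tmap_simps inj_image_mem_iff[OF inj])
next
  case (TCond \<phi> \<psi>)
  show ?case
    by (auto simp: tmap_simps ext_tmap most_tmap inj_image_mem_iff[OF inj] inj_image_subset_iff[OF inj])
next
  case (TB a)
  have St: "\<And>b. Rel M s b \<Longrightarrow> b \<in> St M" using tm unfolding trust_model_def by blast
  show ?case
  proof
    assume h: "tsat (tmap f M) (f s) (TB a)"
    show "tsat M s (TB a)"
    proof (simp, intro allI impI)
      fix b assume "Rel M s b"
      then have "Rel (tmap f M) (f s) (f b)" by (auto simp: tmap_simps)
      then have "tsat (tmap f M) (f b) a" using h by simp
      then show "tsat M b a" using TB.IH St \<open>Rel M s b\<close> by blast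
    qed
  next
    assume h: "tsat M s (TB a)"
    show "tsat (tmap f M) (f s) (TB a)"
    proof (simp, intro allI impI)
      fix v assume "Rel (tmap f M) (f s) v"
      then obtain a' b where "f s = f a'" "v = f b" "Rel M a' b" by (auto simp: tmap_simps)
      then have "Rel M s b" using injD[OF inj] by metis
      then show "tsat (tmap f M) v a" using TB.IH St h \<open>v = f b\<close> by auto
    qed
  qed
qed auto

end

definition tagcode :: "pform option \<Rightarrow> tform" where
  "tagcode t = (case t of None \<Rightarrow> TBot | Some \<phi> \<Rightarrow> TCond \<phi> \<phi>)"

definition enc :: "cw \<Rightarrow> tform set set" where
  "enc w = {TB ` fst w \<union> {tagcode (snd w)}}"

lemma inj_enc: "inj enc"
proof (rule injI)
  fix x y assume "enc x = enc y"
  then have e: "TB ` fst x \<union> {tagcode (snd x)} = TB ` fst y \<union> {tagcode (snd y)}" unfolding enc_def by auto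
  have nc: "\<And>t A. tagcode t \<notin> TB ` A" unfolding tagcode_def by (auto split: option.splits)
  have "tagcode (snd x) \<in> TB ` fst y \<union> {tagcode (snd y)}" using e by blast
  then have "tagcode (snd x) = tagcode (snd y)" using nc by blast
  then have 1: "snd x = snd y" unfolding tagcode_def by (auto split: option.splits)
  have a: "TB ` fst x = (TB ` fst x \<union> {tagcode (snd x)}) \<inter> range TB" using nc by auto
  have b: "TB ` fst y = (TB ` fst y \<union> {tagcode (snd y)}) \<inter> range TB" using nc by auto
  have "TB ` fst x = TB ` fst y"
    by (rule trans[OF a], rule trans[OF _ b[symmetric]], simp only: e)
  then have "fst x = fst y" by (simp add: inj_image_eq_iff inj_def)
  with 1 show "x = y" by (simp add: prod_eq_iff)
qed

theorem theorem5:
  fixes \<Phi> :: "tform set" and \<alpha> :: tform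
  assumes "\<Phi> \<Turnstile> \<alpha>"
  shows "\<Phi> \<turnstile> \<alpha>"
proof (rule ccontr)
  assume nd: "\<not> \<Phi> \<turnstile> \<alpha>"
  have "consistent (insert (TNot \<alpha>) \<Phi>)"
  proof (rule ccontr)
    assume "\<not> consistent (insert (TNot \<alpha>) \<Phi>)"
    then have "\<Phi> \<turnstile> TImp (TNot \<alpha>) TBot" unfolding consistent_def by (intro deduction) auto
    then have "\<Phi> \<turnstile> \<alpha>" by (rule der_taut1) simp
    then show False using nd by auto
  qed
  then obtain \<Gamma> where G: "insert (TNot \<alpha>) \<Phi> \<subseteq> \<Gamma>" "mcs \<Gamma>" using lindenbaum by blast
  let ?w = "(\<Gamma>, None :: pform option)"
  have wW: "?w \<in> Wd" using Wd_None G by auto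
  have sat: "\<forall>b\<in>\<Phi>. tsat CM ?w b" using truth[OF wW] G by auto
  have nsat: "\<not> tsat CM ?w \<alpha>" using truth[OF wW] G mcs_not by auto
  have tm: "trust_model (tmap enc CM)" using model_tmap[OF inj_enc CM_model] .
  have sW: "enc ?w \<in> St (tmap enc CM)" using wW by (simp add: tmap_simps CM_simps)
  have "\<forall>b\<in>\<Phi>. tsat (tmap enc CM) (enc ?w) b"
    using sat tsat_tmap[OF inj_enc CM_model] wW by (simp add: CM_simps)
  moreover have "\<not> tsat (tmap enc CM) (enc ?w) \<alpha>"
    using nsat tsat_tmap[OF inj_enc CM_model] wW by (simp add: CM_simps)
  ultimately show False using assms tm sW unfolding entails_def entails_on_def by blast
qed


end
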